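(* Suppose Assumption D holds. Let $P\in\Delta(\Theta,\mathcal{B})$, $\eta>0$, let $\pi:\Theta\to\mathbb{R}$ be bounded and measurable, let $\mathcal{E}$ be a $\sigma$-algebra, and let $\bar\pi:=\mathbb{E}_P[\pi\mid\mathcal{E}]$. Then $$\inf_Q\{\mathbb{E}_Q[\bar\pi]:D(Q\|P)\le\eta\}\ \ge\ \inf_Q\{\mathbb{E}_Q[\pi]:D(Q\|P)\le\eta\},$$ where $Q$ ranges over $\Delta(\Theta,\mathcal{B})$.
   Context: $\Theta=[\underline\theta,\bar\theta]\subset\mathbb{R}$ ($0<\underline\theta<\bar\theta$) with Borel $\sigma$-algebra $\mathcal{B}$; "$\sigma$-algebra" means a sub-$\sigma$-algebra of $\mathcal{B}$; $\Delta(\Theta,\mathcal{A})$ is the set of probability measures on $(\Theta,\mathcal{A})$; $P_{\mathcal{E}}$ is the restriction of $P$ to $\mathcal{E}$. A divergence $D$ assigns to each pair $Q,P$ of probability measures on a common $\sigma$-algebra a number $D(Q\|P)\in[0,\infty]$. Assumption D: for every $\sigma$-algebra $\mathcal{A}$ and $P,Q\in\Delta(\Theta,\mathcal{A})$: (D1) $D(Q\|P)=0$ if $Q=P$; (D2) if $Q\ll P$ and $dQ/dP$ is bounded, $\epsilon\mapsto D(\epsilon Q+(1-\epsilon)P\|P)$ is continuous on $[0,1]$; (D3) $D(Q\|P)<\infty$ implies $Q\ll P$; (D4) $D(Q_{\mathcal{E}}\|P_{\mathcal{E}})\le D(Q\|P)$ for every sub-$\sigma$-algebra $\mathcal{E}\subset\mathcal{A}$;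 (D5) $D(Q_{\mathcal{E}}\|P_{\mathcal{E}})=D(Q\|P)$ whenever $dQ_{\mathcal{E}}/dP_{\mathcal{E}}=dQ/dP$ $P$-a.e. *)

theory Defs
  imports "HOL-Probability.Probability"
begin

definition Borel_Theta :: "real \<Rightarrow> real \<Rightarrow> real set set" where
  "Borel_Theta a b = sets (restrict_space borel {a..b})"

definition is_sigma_alg :: "real \<Rightarrow> real \<Rightarrow> real set set \<Rightarrow> bool" where
  "is_sigma_alg a b A \<longleftrightarrow> sigma_algebra {a..b} A \<and> A \<subseteq> Borel_Theta a b"

definition Delta :: "real \<Rightarrow> real \<Rightarrow> real set set \<Rightarrow> real measure set" where
  "Delta a b A = {Q. prob_space Q \<and> space Q = {a..b} \<and> sets Q = A}"

definition restr :: "real measure \<Rightarrow> real set set \<Rightarrow> real measure" where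
  "restr P E = measure_of (space P) E (emeasure P)"

definition mix :: "real \<Rightarrow> real measure \<Rightarrow> real measure \<Rightarrow> real measure" where
  "mix e Q P = measure_of (space P) (sets P)
      (\<lambda>S. ennreal e * emeasure Q S + ennreal (1 - e) * emeasure P S)"

text \<open>Assumption D for a divergence D (a function of two measures on a common
  sigma-algebra, carried by the measures themselves).\<close>
definition assumption_D :: "real \<Rightarrow> real \<Rightarrow> (real measure \<Rightarrow> real measure \<Rightarrow> ennreal) \<Rightarrow> bool" where
  "assumption_D a b D \<longleftrightarrow>
    (\<forall>A. is_sigma_alg a b A \<longrightarrow> (\<forall>P\<in>Delta a b A. \<forall>Q\<in>Delta a b A.
       (Q = P \<longrightarrow> D Q P = 0)
     \<and> ((absolutely_continuous P Q \<and> (\<exists>C::real. AE x in P. RN_deriv P Q x \<le> ennreal C))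
          \<longrightarrow> continuous_on {0..1} (\<lambda>e. D (mix e Q P) P))
     \<and> (D Q P < \<infinity> \<longrightarrow> absolutely_continuous P Q)
     \<and> (\<forall>E. is_sigma_alg a b E \<and> E \<subseteq> A \<longrightarrow> D (restr Q E) (restr P E) \<le> D Q P)
     \<and> (\<forall>E. is_sigma_alg a b E \<and> E \<subseteq> A \<and> absolutely_continuous P Q \<and>
            (AE x in P. RN_deriv (restr P E) (restr Q E) x = RN_deriv P Q x)
            \<longrightarrow> D (restr Q E) (restr P E) = D Q P)))"

end

theory Submission
  imports Defs
begin

theorem proposition2:
  fixes a b :: real and D :: "real measure \<Rightarrow> real measure \<Rightarrow> ennreal"
    and P :: "real measure" and \<eta> :: real and \<pi> :: "real \<Rightarrow> real" and E :: "real set set"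
  assumes "0 < a" "a < b"
    and "assumption_D a b D"
    and "P \<in> Delta a b (Borel_Theta a b)"
    and "\<eta> > 0"
    and "\<pi> \<in> borel_measurable (restrict_space borel {a..b})"
    and "\<exists>C. \<forall>x\<in>{a..b}. \<bar>\<pi> x\<bar> \<le> C"
    and "is_sigma_alg a b E"
  shows "(INF Q\<in>{Q\<in>Delta a b (Borel_Theta a b). D Q P \<le> ennreal \<eta>}.
            integral\<^sup>L Q (real_cond_exp P (restr P E) \<pi>))
         \<ge> (INF Q\<in>{Q\<in>Delta a b (Borel_Theta a b). D Q P \<le> ennreal \<eta>}. integral\<^sup>L Q \<pi>)"
proof -
  define \<Omega> where "\<Omega> = {a..b}"
  define B where "B = Borel_Theta a b"
  define S where "S = {Q\<in>Delta a b B. D Q P \<le> ennreal \<eta>}"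
  define F where "F = restr P E"
  define pb where "pb = real_cond_exp P F \<pi>"
  obtain C where C: "\<And>x. x \<in> \<Omega> \<Longrightarrow> \<bar>\<pi> x\<bar> \<le> C" using assms(7) unfolding \<Omega>_def by blast
  have sigE: "sigma_algebra \<Omega> E" and EB: "E \<subseteq> B" using assms(8) unfolding is_sigma_alg_def \<Omega>_def B_def by auto
  have Bsig: "is_sigma_alg a b B" unfolding is_sigma_alg_def B_def Borel_Theta_def
    by (metis sets.sigma_algebra_axioms space_restrict_space2 space_borel sets_UNIV order_refl 
         space_restrict_space Int_UNIV_left)
  have OmE: "\<Omega> \<in> E" 
  proof -
    interpret sE: sigma_algebra \<Omega> E by (rule sigE)
    show ?thesis by (rule sE.top)
  qed
  have EPow: "E \<subseteq> Pow \<Omega>" proof -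
    interpret sE: sigma_algebra \<Omega> E by (rule sigE)
    show ?thesis by (rule sE.space_closed)
  qed
  have sP: "sets P = B" and spP: "space P = \<Omega>" and probP: "prob_space P"
    using assms(4) unfolding Delta_def B_def \<Omega>_def by auto
  have sF: "sets F = E" unfolding F_def restr_def using EPow sigE spP
    by (simp add: sigma_algebra.sigma_sets_eq)
  have spF: "space F = \<Omega>" unfolding F_def restr_def using EPow spP by simp
  have subM: "subalgebra M F" if "space M = \<Omega>" "sets M = B" for M
    unfolding subalgebra_def using that sF spF EB by auto
  have restrM: "restr M E = restr_to_subalg M F" if "space M = \<Omega>" for M
    unfolding restr_def restr_to_subalg_def using that sF by simp
  have PF: "restr_to_subalg P F = F" using restrM[OF spP] F_def by simp
  interpret P: prob_space P by (rule probP)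
  interpret PS: finite_measure_subalgebra P F
    by unfold_locales (rule subM[OF spP sP])
  have PD: "P \<in> Delta a b B" using assms(4) B_def by simp
  have Dax: "\<And>Q. Q \<in> Delta a b B \<Longrightarrow>
       (D Q P < \<infinity> \<longrightarrow> absolutely_continuous P Q)
     \<and> D (restr Q E) (restr P E) \<le> D Q P
     \<and> (absolutely_continuous P Q \<and>
            (AE x in P. RN_deriv (restr P E) (restr Q E) x = RN_deriv P Q x)
            \<longrightarrow> D (restr Q E) (restr P E) = D Q P)"
    using assms(3) Bsig PD assms(8) EB unfolding assumption_D_def by blast
  have pbF[measurable]: "pb \<in> borel_measurable F" unfolding pb_def by (rule borel_measurable_cond_exp)
  have piM: "\<pi> \<in> borel_measurable M" if "sets M = B" for M
  proof -
    have "measurable M borel = measurable (restrict_space borel {a..b}) borel"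
      by (rule measurable_cong_sets) (use that in \<open>auto simp: B_def Borel_Theta_def\<close>)
    then show ?thesis using assms(6) by metis
  qed
  have key: "\<exists>Q'\<in>S. integral\<^sup>L Q' \<pi> = integral\<^sup>L Q pb" if QS: "Q \<in> S" for Q
  proof -
    have QD: "Q \<in> Delta a b B" and DQ: "D Q P \<le> ennreal \<eta>" using QS S_def by auto
    have sQ: "sets Q = B" and spQ: "space Q = \<Omega>" and probQ: "prob_space Q"
      using QD unfolding Delta_def \<Omega>_def by auto
    interpret Q: prob_space Q by (rule probQ)
    have acQ: "absolutely_continuous P Q" using Dax[OF QD] DQ by (simp add: order_le_less_trans)
    define Qe where "Qe = restr_to_subalg Q F"
    have subQ: "subalgebra Q F" by (rule subM[OF spQ sQ])
    have sQe: "sets Qe = E" unfolding Qe_def using sets_restr_to_subalg[OF subQ] sF by simp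
    have sPe: "sets F = E" by (rule sF)
    interpret Qe: finite_measure Qe unfolding Qe_def by (rule finite_measure_restr_to_subalg[OF subQ]) unfold_locales
    interpret Fm: finite_measure F using finite_measure_restr_to_subalg[OF subM[OF spP sP]] PF by (metis P.finite_measure_axioms)
    have acF: "absolutely_continuous F Qe"
      unfolding absolutely_continuous_def Qe_def
      using null_sets_restr_to_subalg[OF subQ] null_sets_restr_to_subalg[OF subM[OF spP sP]] PF acQ
      unfolding absolutely_continuous_def by auto
    define g where "g = RN_deriv F Qe"
    have gF[measurable]: "g \<in> borel_measurable F" unfolding g_def by simp
    have dg: "density F g = Qe" unfolding g_def using Fm.density_RN_deriv[OF acF] sQe sF by simp
    have gfin: "AE x in F. g x \<noteq> \<infinity>" unfolding g_def 
      using Fm.RN_deriv_finite[OF _ acF] sQe sF Qe.sigma_finite_measure_axioms by simp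
    define gr where "gr = (\<lambda>x. enn2real (g x))"
    have grF[measurable]: "gr \<in> borel_measurable F" unfolding gr_def by simp
    have grP[measurable]: "gr \<in> borel_measurable P" by (rule measurable_from_subalg[OF subM[OF spP sP] grF])
    have gg: "AE x in F. g x = ennreal (gr x)" using gfin unfolding gr_def
      by eventually_elim (simp add: less_top)
    have dgr: "density F (\<lambda>x. ennreal (gr x)) = Qe" using dg density_cong[OF gF _ gg] by simp
    define Q' where "Q' = density P (\<lambda>x. ennreal (gr x))"
    have sQ': "sets Q' = B" and spQ': "space Q' = \<Omega>" unfolding Q'_def using sP spP by auto
    have emQ': "emeasure Q' A = emeasure Q A" if A: "A \<in> E" for A
    proof -
      have AF: "A \<in> sets F" using A sF by simp
      have AP: "A \<in> sets P" using A EB sP by auto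
      have "emeasure Q' A = (\<integral>\<^sup>+ x. ennreal (gr x) * indicator A x \<partial>P)"
        unfolding Q'_def by (rule emeasure_density[OF _ AP]) simp
      also have "\<dots> = (\<integral>\<^sup>+ x. ennreal (gr x) * indicator A x \<partial>F)"
        using nn_integral_subalgebra2[OF subM[OF spP sP], of "\<lambda>x. ennreal (gr x) * indicator A x"] AF PF
        by simp
      also have "\<dots> = emeasure Qe A"
        using emeasure_density[OF _ AF, of "\<lambda>x. ennreal (gr x)"] dgr by simp
      also have "\<dots> = emeasure Q A" unfolding Qe_def by (rule emeasure_restr_to_subalg[OF subQ AF])
      finally show ?thesis .
    qed
    have rQ': "restr Q' E = restr Q E" unfolding restr_def using spQ' spQ
      by (simp, intro measure_of_eq[OF EPow]) (simp add: sigma_algebra.sigma_sets_eq[OF sigE] emQ')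
    have probQ': "prob_space Q'"
      using emQ'[of \<Omega>] OmE Q.emeasure_space_1 spQ spQ' by (intro prob_spaceI) simp
    have Q'D: "Q' \<in> Delta a b B" using probQ' sQ' spQ' unfolding Delta_def \<Omega>_def by simp
    have acQ': "absolutely_continuous P Q'" unfolding Q'_def by (rule absolutely_continuousI_density) simp
    have rn1: "AE x in P. ennreal (gr x) = RN_deriv P Q' x"
      by (rule P.RN_deriv_unique) (auto simp: Q'_def)
    have rQQe: "restr Q' E = Qe" using rQ' restrM[OF spQ] Qe_def by simp
    have rPF: "restr P E = F" using F_def by simp
    have "AE x in restr_to_subalg P F. RN_deriv F Qe x = ennreal (gr x)" unfolding PF using gg unfolding g_def .
    then have rn2: "AE x in P. RN_deriv F Qe x = ennreal (gr x)" by (rule AE_restr_to_subalg[OF subM[OF spP sP]])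
    have rnEq: "AE x in P. RN_deriv (restr P E) (restr Q' E) x = RN_deriv P Q' x"
      using rn1 rn2 unfolding rQQe rPF by eventually_elim simp
    have "D Q' P = D (restr Q' E) (restr P E)" using Dax[OF Q'D] acQ' rnEq by simp
    also have "\<dots> = D (restr Q E) (restr P E)" using rQ' by simp
    also have "\<dots> \<le> D Q P" using Dax[OF QD] by simp
    finally have DQ': "D Q' P \<le> ennreal \<eta>" using DQ by simp
    have Q'S: "Q' \<in> S" using Q'D DQ' S_def by simp
    interpret Q': prob_space Q' by (rule probQ')
    have piP[measurable]: "\<pi> \<in> borel_measurable P" by (rule piM[OF sP])
    have intQ': "integrable Q' \<pi>"
      by (rule Q'.integrable_const_bound[where B=C]) (use C spQ' piM[OF sQ'] in auto)
    have intgp: "integrable P (\<lambda>x. gr x * \<pi> x)"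
      using intQ' integrable_density[of \<pi> P gr] grP unfolding Q'_def by (simp add: gr_def)
    have e1: "integral\<^sup>L Q' \<pi> = (\<integral>x. gr x * \<pi> x \<partial>P)"
      unfolding Q'_def by (subst integral_density) (use grP in \<open>auto simp: gr_def\<close>)
    have "integral\<^sup>L Q pb = integral\<^sup>L Qe pb" unfolding Qe_def by (rule integral_subalgebra2[OF subQ pbF, symmetric])
    also have "\<dots> = (\<integral>x. gr x * pb x \<partial>F)"
      unfolding dgr[symmetric] by (subst integral_density) (use grF in \<open>auto simp: gr_def\<close>)
    also have "\<dots> = (\<integral>x. gr x * pb x \<partial>P)"
      using integral_subalgebra2[OF subM[OF spP sP], of "\<lambda>x. gr x * pb x"] PF by simp
    also have "\<dots> = (\<integral>x. gr x * \<pi> x \<partial>P)"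
      unfolding pb_def by (rule PS.real_cond_exp_intg(2)[OF intgp grF piP])
    finally show ?thesis using Q'S e1 by metis
  qed
  have D1: "D P P = 0" using assms(3) Bsig PD unfolding assumption_D_def by blast
  have PS': "P \<in> S" using PD D1 S_def by simp
  have bdd: "bdd_below ((\<lambda>Q. integral\<^sup>L Q \<pi>) ` S)"
  proof (rule bdd_belowI2)
    fix Q assume "Q \<in> S"
    then have sQ: "sets Q = B" and spQ: "space Q = \<Omega>" and probQ: "prob_space Q"
      unfolding S_def Delta_def \<Omega>_def by auto
    interpret Q: prob_space Q by (rule probQ)
    have iQ: "integrable Q \<pi>"
      by (rule Q.integrable_const_bound[where B=C]) (use C spQ piM[OF sQ] in auto)
    show "- C \<le> integral\<^sup>L Q \<pi>"
      by (rule Q.integral_ge_const[OF iQ]) (use C spQ in \<open>fastforce intro!: AE_I2 simp: abs_le_iff\<close>)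
  qed
  have "(INF Q\<in>S. integral\<^sup>L Q \<pi>) \<le> (INF Q\<in>S. integral\<^sup>L Q pb)"
  proof (rule cINF_greatest)
    show "S \<noteq> {}" using PS' by auto
    fix Q assume "Q \<in> S"
    then obtain Q' where "Q' \<in> S" "integral\<^sup>L Q' \<pi> = integral\<^sup>L Q pb" using key by blast
    then show "(INF Q\<in>S. integral\<^sup>L Q \<pi>) \<le> integral\<^sup>L Q pb" using cINF_lower[OF bdd, of Q'] by simp
  qed
  then show ?thesis unfolding S_def B_def pb_def F_def by simp
qed

end
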